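(* Suppose the conditional gradient algorithm chooses $\theta_k$ by the exact line search $\theta_k\in\arg\min_{\theta\in[0,1]}\{(1-\theta)\mathrm{gap}(x_k,g_k)+\mathcal D(x_k,s_k,\theta)\}$ and $(\mathcal D,\mathrm{gap})$ satisfies the $(q,0)$-growth property for some $q>1$ and $M>0$, i.e. $\mathcal D(x,s,\theta)\le M\theta^q/q$ for all $x\in\mathrm{dom}(\Psi)$, $s\in\partial\Psi^*(-\nabla f(x))$, $\theta\in[0,1]$. Then $\mathrm{gap}_1\le M/q$ and for all $k\ge1$ \[ \mathrm{gap}_k\le M\Big(\frac{q}{k-1+q^{\frac{q}{q-1}}}\Big)^{q-1}. \] In particular, for $q=2$, $\mathrm{gap}_k\le \frac{2M}{k+3}$ for all $k\ge1$.
   Context: Let $f,\Psi:\mathbb{R}^n\to\mathbb{R}\cup\{\infty\}$ be closed proper convex functions such that (A1) $f$ is differentiable on $\mathrm{dom}(\Psi)$, and (A2) for every $x\in\mathrm{dom}(f)$ the set $\arg\min_s\{\langle\nabla f(x),s\rangle+\Psi(s)\}$ is nonempty. $f^*,\Psi^*$ denote convex conjugates; $\arg\min_y\{\langle g,y\rangle+\Psi(y)\}=\partial\Psi^*(-g)$. $D_f(y,x)=f(y)-f(x)-\langle\nabla f(x),y-x\rangle$. Duality gap: $\mathrm{gap}(x,u)=f(x)+\Psi(x)+f^*(u)+\Psi^*(-u)$ for $x\in\mathrm{dom}(\Psi)$, $u\in\mathrm{dom}(f^* )$. For $x,s\in\mathrm{dom}(\Psi)$, $\theta\in[0,1]$: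 $\mathcal{D}(x,s,\theta)=D_f(x+\theta(s-x),x)+\Psi(x+\theta(s-x))-(1-\theta)\Psi(x)-\theta\Psi(s)$. Conditional gradient algorithm: given $x_0\in\mathrm{dom}(\Psi)$, for $k=0,1,2,\dots$ let $g_k=\nabla f(x_k)$, pick $s_k\in\arg\min_y\{\langle g_k,y\rangle+\Psi(y)\}$ and $\theta_k\in[0,1]$, and set $x_{k+1}=(1-\theta_k)x_k+\theta_k s_k$. The best duality gaps are $\mathrm{gap}_k=\min_{i=0,\dots,k}\mathrm{gap}(x_k,g_i)$. *)

theory Defs
  imports "HOL-Analysis.Analysis"
begin

definition edom :: "('a \<Rightarrow> ereal) \<Rightarrow> 'a set" where
  "edom f = {x. f x < \<infinity>}"

definition proper_fun :: "('a \<Rightarrow> ereal) \<Rightarrow> bool" where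
  "proper_fun f \<longleftrightarrow> (\<exists>x. f x < \<infinity>) \<and> (\<forall>x. f x > -\<infinity>)"

definition convex_efun :: "('a::real_vector \<Rightarrow> ereal) \<Rightarrow> bool" where
  "convex_efun f \<longleftrightarrow> convex {(x, t::real). f x \<le> ereal t}"

definition closed_efun :: "('a::topological_space \<Rightarrow> ereal) \<Rightarrow> bool" where
  "closed_efun f \<longleftrightarrow> closed {(x, t::real). f x \<le> ereal t}"

definition closed_proper_convex :: "('a::real_normed_vector \<Rightarrow> ereal) \<Rightarrow> bool" where
  "closed_proper_convex f \<longleftrightarrow> closed_efun f \<and> proper_fun f \<and> convex_efun f"

definition fconj :: "('a::real_inner \<Rightarrow> ereal) \<Rightarrow> 'a \<Rightarrow> ereal" where
  "fconj f u = (SUP x. ereal (u \<bullet> x) - f x)"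

text \<open>arg min_y { <g,y> + Psi y } (equal to the subdifferential of Psi^* at -g).\<close>
definition lin_argmin :: "('a::real_inner \<Rightarrow> ereal) \<Rightarrow> 'a \<Rightarrow> 'a set" where
  "lin_argmin Psi g = {s. \<forall>y. ereal (g \<bullet> s) + Psi s \<le> ereal (g \<bullet> y) + Psi y}"

definition bregman :: "('a::real_inner \<Rightarrow> ereal) \<Rightarrow> ('a \<Rightarrow> 'a) \<Rightarrow> 'a \<Rightarrow> 'a \<Rightarrow> ereal" where
  "bregman f gradf y x = f y - f x - ereal (gradf x \<bullet> (y - x))"

definition gap :: "('a::real_inner \<Rightarrow> ereal) \<Rightarrow> ('a \<Rightarrow> ereal) \<Rightarrow> 'a \<Rightarrow> 'a \<Rightarrow> ereal" where
  "gap f Psi x u = f x + Psi x + fconj f u + fconj Psi (- u)"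

definition Dcal :: "('a::real_inner \<Rightarrow> ereal) \<Rightarrow> ('a \<Rightarrow> 'a) \<Rightarrow> ('a \<Rightarrow> ereal)
    \<Rightarrow> 'a \<Rightarrow> 'a \<Rightarrow> real \<Rightarrow> ereal" where
  "Dcal f gradf Psi x s \<theta> =
     bregman f gradf (x + \<theta> *\<^sub>R (s - x)) x + Psi (x + \<theta> *\<^sub>R (s - x))
       - ereal (1 - \<theta>) * Psi x - ereal \<theta> * Psi s"

definition best_gap :: "('a::real_inner \<Rightarrow> ereal) \<Rightarrow> ('a \<Rightarrow> 'a) \<Rightarrow> ('a \<Rightarrow> ereal)
    \<Rightarrow> (nat \<Rightarrow> 'a) \<Rightarrow> nat \<Rightarrow> ereal" where
  "best_gap f gradf Psi x k = Min ((\<lambda>i. gap f Psi (x k) (gradf (x i))) ` {0..k})"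

end

theory Submission
  imports Defs
begin


lemma epi_conv:
  fixes f :: "'a::real_vector \<Rightarrow> ereal"
  assumes "convex_efun f" "f a \<le> ereal ra" "f b \<le> ereal rb" "0 \<le> t" "t \<le> 1"
  shows "f ((1 - t) *\<^sub>R a + t *\<^sub>R b) \<le> ereal ((1 - t) * ra + t * rb)"
proof -
  have c: "convex {(x, t::real). f x \<le> ereal t}" using assms(1) unfolding convex_efun_def .
  have "(1 - t) *\<^sub>R (a, ra) + t *\<^sub>R (b, rb) \<in> {(x, t::real). f x \<le> ereal t}"
    by (rule convexD[OF c]) (use assms in auto)
  then show ?thesis by simp
qed

lemma grad_ineq:
  fixes f :: "'a::real_inner \<Rightarrow> ereal"
  assumes cv: "convex_efun f" and pr: "\<forall>x. f x > -\<infinity>"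
    and fy: "f y = ereal Fy"
    and der: "((\<lambda>z. real_of_ereal (f z)) has_derivative (\<lambda>h. g \<bullet> h)) (at y)"
    and fw: "f w = ereal Fw"
  shows "Fy + g \<bullet> (w - y) \<le> Fw"
proof -
  define F where "F = (\<lambda>z. real_of_ereal (f z))"
  define d where "d = w - y"
  have "((\<lambda>t. y + t *\<^sub>R d) has_derivative (\<lambda>h. h *\<^sub>R d)) (at 0)"
    by (auto intro!: derivative_eq_intros)
  moreover have "((\<lambda>z. F z) has_derivative (\<lambda>h. g \<bullet> h)) (at (y + 0 *\<^sub>R d))"
    using der by (simp add: F_def)
  ultimately have "((\<lambda>t. F (y + t *\<^sub>R d)) has_derivative (\<lambda>h. g \<bullet> (h *\<^sub>R d))) (at 0)"
    using has_derivative_compose[of "\<lambda>t. y + t *\<^sub>R d" "\<lambda>h. h *\<^sub>R d" 0 UNIV F "\<lambda>h. g \<bullet> h"] by simp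
  then have "((\<lambda>t. F (y + t *\<^sub>R d)) has_field_derivative (g \<bullet> d)) (at 0)"
    unfolding has_field_derivative_def by (rule has_derivative_eq_rhs) (auto simp: mult.commute)
  then have lim: "((\<lambda>h. (F (y + h *\<^sub>R d) - F y) / h) \<longlongrightarrow> g \<bullet> d) (at 0)"
    unfolding DERIV_def by simp
  then have lim2: "((\<lambda>h. (F (y + h *\<^sub>R d) - F y) / h) \<longlongrightarrow> g \<bullet> d) (at_right 0)"
    by (rule filterlim_mono) (auto simp: at_le)
  have evb: "eventually (\<lambda>h. h \<in> {0<..<(1::real)}) (at_right 0)"
    by (rule eventually_at_right_real) simp
  have ev: "eventually (\<lambda>h. (F (y + h *\<^sub>R d) - F y) / h \<le> Fw - Fy) (at_right 0)"
    using evb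
  proof (rule eventually_mono)
    fix h :: real assume h: "h \<in> {0<..<1}"
    have "y + h *\<^sub>R d = (1 - h) *\<^sub>R y + h *\<^sub>R w" by (simp add: d_def algebra_simps)
    then have le: "f (y + h *\<^sub>R d) \<le> ereal ((1 - h) * Fy + h * Fw)"
      using epi_conv[OF cv, of y Fy w Fw h] h fy fw by auto
    then have "F (y + h *\<^sub>R d) \<le> (1 - h) * Fy + h * Fw"
      using pr[rule_format, of "y + h *\<^sub>R d"] unfolding F_def
      by (cases "f (y + h *\<^sub>R d)") auto
    then have "F (y + h *\<^sub>R d) - F y \<le> h * (Fw - Fy)" using fy by (simp add: F_def algebra_simps)
    then show "(F (y + h *\<^sub>R d) - F y) / h \<le> Fw - Fy" using h by (simp add: divide_simps mult.commute)
  qed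
  have "g \<bullet> d \<le> Fw - Fy"
    by (rule tendsto_upperbound[OF lim2 ev]) simp
  then show ?thesis by (simp add: d_def)
qed



lemma key_ineq:
  fixes x a :: real
  assumes "x > 0" "a > 0" "1 - a * x \<ge> 0"
  shows "(1 + x) powr a * (1 - a * x) \<le> 1"
proof -
  have "(1 + x) powr a = exp (a * ln (1 + x))" using assms by (simp add: powr_def)
  also have "\<dots> \<le> exp (a * x)"
    using ln_add_one_self_le_self[of x] assms by (simp add: mult_left_mono)
  finally have h1: "(1 + x) powr a \<le> exp (a * x)" .
  have h2: "1 - a * x \<le> exp (- (a * x))" using exp_ge_add_one_self[of "- (a*x)"] by simp
  have "(1 + x) powr a * (1 - a * x) \<le> exp (a * x) * exp (- (a * x))"
    by (rule mult_mono[OF h1 h2]) (use assms in auto)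
  also have "\<dots> = 1" by (simp add: exp_minus)
  finally show ?thesis .
qed

lemma rec_bound:
  fixes a :: "nat \<Rightarrow> real" and q M :: real
  assumes q: "q > 1" and M: "M > 0"
    and rec: "\<forall>k. \<forall>t\<in>{0..1}. a (Suc k) \<le> (1 - t) * a k + M * t powr q / q"
    and a1: "a 1 \<le> M / q" and k: "k \<ge> 1"
  shows "a k \<le> M * (q / (real k - 1 + q powr (q / (q - 1)))) powr (q - 1)"
  using k
proof (induction k rule: nat_induct_at_least)
  case base
  have "(q powr (q / (q - 1))) powr (q - 1) = q powr q"
    using q by (simp add: powr_powr)
  then have "(q / (q powr (q / (q - 1)))) powr (q - 1) = q powr (q - 1) / q powr q"
    using q by (simp add: powr_divide)
  also have "\<dots> = 1 / q" using q by (simp add: powr_diff)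
  finally show ?case using a1 by simp
next
  case (Suc k)
  define c where "c = q powr (q / (q - 1))"
  have "q / (q - 1) \<ge> 1" using q by (simp add: field_simps)
  then have "q powr 1 \<le> q powr (q / (q - 1))" using q by (intro powr_mono) auto
  then have cq: "c \<ge> q" using q by (simp add: c_def)
  define u where "u = real k - 1 + c"
  have uq: "u \<ge> q" using Suc.hyps cq by (simp add: u_def)
  define t where "t = q / u"
  have t01: "t \<in> {0..1}" using uq q by (simp add: t_def field_simps)
  have tpos: "t > 0" using uq q by (simp add: t_def)
  have IH: "a k \<le> M * t powr (q - 1)" using Suc.IH by (simp add: t_def u_def c_def)
  have "a (Suc k) \<le> (1 - t) * a k + M * t powr q / q" using rec t01 by blast
  also have "\<dots> \<le> (1 - t) * (M * t powr (q - 1)) + M * t powr q / q"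
    using IH t01 by (intro add_right_mono mult_left_mono) auto
  also have "t powr q = t powr (q - 1) * t" using tpos by (simp add: powr_diff)
  also have "(1 - t) * (M * t powr (q - 1)) + M * (t powr (q - 1) * t) / q
      = M * t powr (q - 1) * (1 - (q - 1) / u)"
    using q uq by (simp add: t_def field_simps)
  also have "t powr (q - 1) = (q / (u + 1)) powr (q - 1) * (1 + 1 / u) powr (q - 1)"
  proof -
    have u0: "u > 0" "u + 1 > 0" using uq q by auto
    have "1 + 1 / u = (u + 1) / u" using u0 by (simp add: field_simps)
    then have "t = (q / (u + 1)) * (1 + 1 / u)" using u0 by (simp add: t_def)
    then show ?thesis using u0 q by (simp only: powr_mult[symmetric])
  qed
  also have "M * ((q / (u + 1)) powr (q - 1) * (1 + 1 / u) powr (q - 1)) * (1 - (q - 1) / u)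
     = M * (q / (u + 1)) powr (q - 1) * ((1 + 1 / u) powr (q - 1) * (1 - (q - 1) * (1 / u)))"
    by simp
  also have "\<dots> \<le> M * (q / (u + 1)) powr (q - 1) * 1"
    using q uq M by (intro mult_left_mono key_ineq) (auto simp: field_simps)
  finally show ?case by (simp add: u_def c_def)
qed



lemma fconj_grad:
  fixes f :: "'a::real_inner \<Rightarrow> ereal"
  assumes gi: "\<And>w Fw. f w = ereal Fw \<Longrightarrow> Fy + g \<bullet> (w - y) \<le> Fw"
    and pr: "\<forall>x. f x > -\<infinity>" and fy: "f y = ereal Fy"
  shows "fconj f g = ereal (g \<bullet> y - Fy)"
  unfolding fconj_def
proof (rule antisym)
  show "(SUP x. ereal (g \<bullet> x) - f x) \<le> ereal (g \<bullet> y - Fy)"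
  proof (rule SUP_least)
    fix w
    show "ereal (g \<bullet> w) - f w \<le> ereal (g \<bullet> y - Fy)"
    proof (cases "f w")
      case (real r)
      then have "Fy + g \<bullet> (w - y) \<le> r" using gi by blast
      then show ?thesis using real by (simp add: inner_diff_right)
    next
      case PInf then show ?thesis by simp
    next
      case MInf then show ?thesis using pr by auto
    qed
  qed
next
  have "ereal (g \<bullet> y) - f y = ereal (g \<bullet> y - Fy)" using fy by simp
  then show "ereal (g \<bullet> y - Fy) \<le> (SUP x. ereal (g \<bullet> x) - f x)"
    using SUP_upper[of y UNIV "\<lambda>x. ereal (g \<bullet> x) - f x"] by simp
qed

lemma fconj_argmin:
  fixes Psi :: "'a::real_inner \<Rightarrow> ereal"
  assumes s: "s \<in> lin_argmin Psi g" and pr: "\<forall>x. Psi x > -\<infinity>" and ps: "Psi s = ereal Ps"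
  shows "fconj Psi (- g) = ereal (- (g \<bullet> s) - Ps)"
  unfolding fconj_def
proof (rule antisym)
  show "(SUP x. ereal (- g \<bullet> x) - Psi x) \<le> ereal (- (g \<bullet> s) - Ps)"
  proof (rule SUP_least)
    fix w
    have am: "ereal (g \<bullet> s) + Psi s \<le> ereal (g \<bullet> w) + Psi w" using s unfolding lin_argmin_def by blast
    show "ereal (- g \<bullet> w) - Psi w \<le> ereal (- (g \<bullet> s) - Ps)"
    proof (cases "Psi w")
      case (real r)
      then have "g \<bullet> s + Ps \<le> g \<bullet> w + r" using am ps by simp
      then show ?thesis using real by simp
    next
      case PInf then show ?thesis by simp
    next
      case MInf then show ?thesis using pr by auto
    qed
  qed
next
  have "ereal (- g \<bullet> s) - Psi s = ereal (- (g \<bullet> s) - Ps)" using ps by simp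
  then show "ereal (- (g \<bullet> s) - Ps) \<le> (SUP x. ereal (- g \<bullet> x) - Psi x)"
    using SUP_upper[of s UNIV "\<lambda>x. ereal (- g \<bullet> x) - Psi x"] by simp
qed

lemma argmin_dom:
  fixes Psi :: "'a::real_inner \<Rightarrow> ereal"
  assumes s: "s \<in> lin_argmin Psi g" and pr: "proper_fun Psi"
  shows "s \<in> edom Psi"
proof -
  obtain y where y: "Psi y < \<infinity>" using pr unfolding proper_fun_def by blast
  have am: "ereal (g \<bullet> s) + Psi s \<le> ereal (g \<bullet> y) + Psi y" using s unfolding lin_argmin_def by blast
  have "ereal (g \<bullet> y) + Psi y < \<infinity>" using y by simp
  then have "ereal (g \<bullet> s) + Psi s < \<infinity>" using am by (meson le_less_trans)
  then show ?thesis unfolding edom_def by auto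
qed


theorem mainTheorem4:
  fixes f Psi :: "'a::euclidean_space \<Rightarrow> ereal"
    and gradf :: "'a \<Rightarrow> 'a"
    and x s :: "nat \<Rightarrow> 'a"
    and \<theta> :: "nat \<Rightarrow> real"
    and q M :: real
  assumes f_cpc: "closed_proper_convex f"
    and Psi_cpc: "closed_proper_convex Psi"
    and A1: "\<forall>y\<in>edom Psi. y \<in> interior (edom f) \<and>
               ((\<lambda>z. real_of_ereal (f z)) has_derivative (\<lambda>h. gradf y \<bullet> h)) (at y)"
    and A2: "\<forall>y\<in>edom Psi. lin_argmin Psi (gradf y) \<noteq> {}"
    and x0: "x 0 \<in> edom Psi"
    and s_choice: "\<forall>k. s k \<in> lin_argmin Psi (gradf (x k))"
    and theta_range: "\<forall>k. \<theta> k \<in> {0..1}"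
    and line_search: "\<forall>k. \<forall>t\<in>{0..1}.
          ereal (1 - \<theta> k) * gap f Psi (x k) (gradf (x k)) + Dcal f gradf Psi (x k) (s k) (\<theta> k)
          \<le> ereal (1 - t) * gap f Psi (x k) (gradf (x k)) + Dcal f gradf Psi (x k) (s k) t"
    and update: "\<forall>k. x (Suc k) = (1 - \<theta> k) *\<^sub>R x k + \<theta> k *\<^sub>R s k"
    and q_gt: "q > 1"
    and M_pos: "M > 0"
    and growth: "\<forall>y\<in>edom Psi. \<forall>z\<in>lin_argmin Psi (gradf y). \<forall>t\<in>{0..1}.
          Dcal f gradf Psi y z t \<le> ereal (M * t powr q / q)"
  shows "best_gap f gradf Psi x 1 \<le> ereal (M / q)
    \<and> (\<forall>k\<ge>1. best_gap f gradf Psi x k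
          \<le> ereal (M * (q / (real k - 1 + q powr (q / (q - 1)))) powr (q - 1)))
    \<and> (q = 2 \<longrightarrow> (\<forall>k\<ge>1. best_gap f gradf Psi x k \<le> ereal (2 * M / (real k + 3))))"
proof -
  have fcv: "convex_efun f" and fpr: "proper_fun f"
    using f_cpc unfolding closed_proper_convex_def by auto
  have Pcv: "convex_efun Psi" and Ppr: "proper_fun Psi"
    using Psi_cpc unfolding closed_proper_convex_def by auto
  have fnm: "\<forall>z. f z > -\<infinity>" using fpr unfolding proper_fun_def by auto
  have Pnm: "\<forall>z. Psi z > -\<infinity>" using Ppr unfolding proper_fun_def by auto
  define F where "F = (\<lambda>z. real_of_ereal (f z))"
  define P where "P = (\<lambda>z. real_of_ereal (Psi z))"
  have finP: "Psi y = ereal (P y)" if "y \<in> edom Psi" for y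
    using that Pnm[rule_format, of y] unfolding edom_def P_def by (cases "Psi y") auto
  have finF: "f y = ereal (F y)" if "y \<in> edom Psi" for y
  proof -
    have "y \<in> edom f" using A1 that interior_subset by blast
    then show ?thesis using fnm[rule_format, of y] unfolding edom_def F_def by (cases "f y") auto
  qed
  have sdom: "s k \<in> edom Psi" for k
    using argmin_dom[OF s_choice[rule_format, of k] Ppr] .
  have seg: "(1 - t) *\<^sub>R y + t *\<^sub>R z \<in> edom Psi"
    if "y \<in> edom Psi" "z \<in> edom Psi" "0 \<le> t" "t \<le> 1" for y z t
  proof -
    have "Psi ((1 - t) *\<^sub>R y + t *\<^sub>R z) \<le> ereal ((1 - t) * P y + t * P z)"
      using epi_conv[OF Pcv, of y "P y" z "P z" t] that finP by auto
    then show ?thesis unfolding edom_def using le_less_trans by fastforce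
  qed
  have xdom: "x k \<in> edom Psi" for k
  proof (induction k)
    case 0 show ?case using x0 .
  next
    case (Suc k) then show ?case
      using seg[of "x k" "s k" "\<theta> k"] sdom theta_range update by auto
  qed
  define g where "g = (\<lambda>k. gradf (x k))"
  define phi where "phi = (\<lambda>k. F (x k) + P (x k))"
  define dual where "dual = (\<lambda>j. g j \<bullet> x j - F (x j) - g j \<bullet> s j - P (s j))"
  have gapeq: "gap f Psi (x k) (g j) = ereal (phi k + dual j)" for k j
  proof -
    have der: "((\<lambda>z. real_of_ereal (f z)) has_derivative (\<lambda>h. g j \<bullet> h)) (at (x j))"
      using A1 xdom unfolding g_def by blast
    have c1: "fconj f (g j) = ereal (g j \<bullet> x j - F (x j))"
      by (rule fconj_grad[OF _ fnm finF[OF xdom]])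
         (rule grad_ineq[OF fcv fnm finF[OF xdom] der], assumption)
    have c2: "fconj Psi (- g j) = ereal (- (g j \<bullet> s j) - P (s j))"
      by (rule fconj_argmin[OF _ Pnm finP[OF sdom]]) (use s_choice g_def in auto)
    show ?thesis unfolding gap_def c1 c2 finF[OF xdom] finP[OF xdom] phi_def dual_def
      by simp
  qed
  have Deq: "Dcal f gradf Psi (x k) (s k) t =
      ereal (F (x k + t *\<^sub>R (s k - x k)) - F (x k) - t * (g k \<bullet> s k - g k \<bullet> x k)
        + P (x k + t *\<^sub>R (s k - x k)) - (1 - t) * P (x k) - t * P (s k))"
    if "0 \<le> t" "t \<le> 1" for k t
  proof -
    have ze: "x k + t *\<^sub>R (s k - x k) = (1 - t) *\<^sub>R x k + t *\<^sub>R s k" by (simp add: algebra_simps)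
    have zd: "x k + t *\<^sub>R (s k - x k) \<in> edom Psi"
      unfolding ze using seg[OF xdom sdom that] .
    have ip: "gradf (x k) \<bullet> (x k + t *\<^sub>R (s k - x k) - x k) = t * (g k \<bullet> s k - g k \<bullet> x k)"
      by (simp add: g_def inner_diff_right)
    show ?thesis unfolding Dcal_def bregman_def ip
      finF[OF zd] finF[OF xdom] finP[OF zd] finP[OF xdom] finP[OF sdom] by simp
  qed
  have R: "phi (Suc k) + dual k \<le> (1 - t) * (phi k + dual k) + M * t powr q / q"
    if t: "t \<in> {0..1}" for k t
  proof -
    define th where "th = \<theta> k"
    have th: "0 \<le> th" "th \<le> 1" using theta_range th_def by auto
    define G where "G = phi k + dual k"
    define Dt where "Dt = F (x k + t *\<^sub>R (s k - x k)) - F (x k) - t * (g k \<bullet> s k - g k \<bullet> x k)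
        + P (x k + t *\<^sub>R (s k - x k)) - (1 - t) * P (x k) - t * P (s k)"
    define Dth where "Dth = F (x k + th *\<^sub>R (s k - x k)) - F (x k) - th * (g k \<bullet> s k - g k \<bullet> x k)
        + P (x k + th *\<^sub>R (s k - x k)) - (1 - th) * P (x k) - th * P (s k)"
    have ls: "ereal (1 - th) * ereal G + ereal Dth \<le> ereal (1 - t) * ereal G + ereal Dt"
      using bspec[OF spec[OF line_search, of k] t] t gapeq[of k k] Deq[where k=k and t=th] Deq[where k=k and t=t] th
      unfolding G_def Dt_def Dth_def th_def g_def by auto
    then have ls': "(1 - th) * G + Dth \<le> (1 - t) * G + Dt" by simp
    have gr: "ereal Dt \<le> ereal (M * t powr q / q)"
      using growth[rule_format, OF xdom s_choice[rule_format, of k], of t] t Deq[where k=k and t=t]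
      unfolding Dt_def g_def by auto
    then have gr': "Dt \<le> M * t powr q / q" by simp
    have x1: "x (Suc k) = x k + th *\<^sub>R (s k - x k)"
      using update th_def by (simp add: algebra_simps)
    have "(1 - th) * G + Dth = phi (Suc k) + dual k"
      unfolding G_def Dth_def phi_def dual_def x1 by (simp add: algebra_simps)
    then show ?thesis using ls' gr' unfolding G_def by linarith
  qed
  define bm where "bm = (\<lambda>k. Min (dual ` {0..k}))"
  have bg: "best_gap f gradf Psi x k = ereal (phi k + bm k)" for k
  proof -
    have "best_gap f gradf Psi x k = Min ((\<lambda>i. ereal (phi k + dual i)) ` {0..k})"
      unfolding best_gap_def using gapeq unfolding g_def by simp
    also have "\<dots> = Min ((\<lambda>d. ereal (phi k + d)) ` (dual ` {0..k}))"
      by (simp add: image_image)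
    also have "\<dots> = ereal (phi k + bm k)"
      unfolding bm_def by (rule mono_Min_commute[symmetric]) (auto simp: mono_def)
    finally show ?thesis .
  qed
  define A where "A = (\<lambda>k. phi k + bm k)"
  have recA: "\<forall>k. \<forall>t\<in>{0..1}. A (Suc k) \<le> (1 - t) * A k + M * t powr q / q"
  proof (intro allI ballI)
    fix k :: nat and t :: real assume t: "t \<in> {0..1}"
    have b1: "bm (Suc k) \<le> bm k" unfolding bm_def
      by (rule Min_antimono) auto
    have b2: "bm k \<le> dual k" unfolding bm_def by (rule Min_le) auto
    have "t * bm k \<le> t * dual k" using b2 t by (intro mult_left_mono) auto
    then show "A (Suc k) \<le> (1 - t) * A k + M * t powr q / q"
      using R[where k=k and t=t, OF t] b1 unfolding A_def by (simp add: algebra_simps)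
  qed
  have a1: "A 1 \<le> M / q"
    using bspec[OF spec[OF recA, of 0], of 1] by simp
  have main: "A k \<le> M * (q / (real k - 1 + q powr (q / (q - 1)))) powr (q - 1)" if "k \<ge> 1" for k
    by (rule rec_bound[OF q_gt M_pos recA a1 that])
  have q2: "A k \<le> 2 * M / (real k + 3)" if "k \<ge> 1" "q = 2" for k
  proof -
    have "(2::real) powr (2 / (2 - 1)) = 4" by simp
    then show ?thesis using main[OF that(1)] that(2) by (simp add: ac_simps)
  qed
  show ?thesis using a1 main q2 bg unfolding A_def by auto
qed

end
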